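(* Let $n\ge2$ and $a,b$ be positive integers, $h(j)=aj^n+b$ for $j\ge0$, $h(j)=0$ for $j<0$, $\alpha=a/b$ and $c(h)=\lfloor\alpha\rfloor+1$. Then $\operatorname{hdepth}(h)\le \operatorname{eq}(h)$. Moreover, if $c(h)\le 4$, then $\operatorname{hdepth}(h)=\operatorname{eq}(h)$.
   Context: For a nonzero function $h:\mathbb Z\to\mathbb Z_{\ge 0}$ with $h(j)=0$ for all sufficiently negative $j$, and integers $k\le d$, set $\beta_k^d(h)=\sum_{j\le k}(-1)^{k-j}\binom{d-j}{k-j}h(j)$, and $\operatorname{hdepth}(h)=\max\{d\in\mathbb Z:\ \beta_k^d(h)\ge 0\text{ for all integers }k\le d\}$. For $1\le i\le 2^n-1$ put $m=2^n+1-i$ and $\lambda_i=\dfrac{m^2+m(2^{n+1}-3)+2^{2n}-3\cdot2^n+4}{2m-2}$ (so $\lambda_1<\lambda_2<\dots<\lambda_{2^n-1}$). Define $$\operatorname{eq}(h)=\begin{cases}c(h),&\alpha\in(0,2^{n+1}-1),\\ 2^{n+1},&\alpha\in[2^{n+1}-1,\lambda_1],\\ 2^{n+1}+1-i,&\alpha\in(\lambda_{i-1},\lambda_i]\ \text{ for } 2\le i\le 2^n-1,\\ 2^n+1,&\alpha\in(\lambda_{2^n-1},\infty).\end{cases}$$ *)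

theory Defs
  imports Complex_Main
begin

text \<open>beta_k^d(h) = sum over j <= k of (-1)^(k-j) * binom(d-j, k-j) * h(j).
  Only finitely many j <= k have h j nonzero (h vanishes for sufficiently negative j),
  so we sum over that finite set.\<close>
definition beta :: "(int \<Rightarrow> int) \<Rightarrow> int \<Rightarrow> int \<Rightarrow> int" where
  "beta h d k = (\<Sum>j \<in> {j. j \<le> k \<and> h j \<noteq> 0}.
      (-1) ^ nat (k - j) * int (nat (d - j) choose nat (k - j)) * h j)"

definition hdepth :: "(int \<Rightarrow> int) \<Rightarrow> int" where
  "hdepth h = (GREATEST d::int. \<forall>k\<le>d. beta h d k \<ge> 0)"

definition lam :: "nat \<Rightarrow> nat \<Rightarrow> real" where
  "lam n i = (let m = real (2^n + 1 - i) in
     (m^2 + m * (2^(n+1) - 3) + 2^(2*n) - 3 * 2^n + 4) / (2*m - 2))"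

text \<open>eq(h) as a function of n and alpha = a/b (c(h) = floor alpha + 1).\<close>
definition eqh :: "nat \<Rightarrow> real \<Rightarrow> int" where
  "eqh n \<alpha> =
     (if 0 < \<alpha> \<and> \<alpha> < 2^(n+1) - 1 then \<lfloor>\<alpha>\<rfloor> + 1
      else if 2^(n+1) - 1 \<le> \<alpha> \<and> \<alpha> \<le> lam n 1 then 2^(n+1)
      else if lam n (2^n - 1) < \<alpha> then 2^n + 1
      else 2^(n+1) + 1 - int (THE i. 2 \<le> i \<and> i \<le> 2^n - 1 \<and>
                                   lam n (i - 1) < \<alpha> \<and> \<alpha> \<le> lam n i))"

end

theory Submission
  imports Defs
begin

definition gg :: "real \<Rightarrow> real \<Rightarrow> real" where
  "gg N x = ((x+N)*(x+N-1)+2)/(2*x)"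

lemma gg_mono:
  assumes x: "0 < x" and xy: "x \<le> y" and p: "x*y \<le> (N-1)^2" and N: "N \<ge> 0"
  shows "gg N y \<le> gg N x"
proof -
  have y: "0 < y" using x xy by linarith
  have h1: "0 \<le> (y-x)*(N^2-N+2 - x*y)"
    using xy p N by (intro mult_nonneg_nonneg) (auto simp: power2_eq_square algebra_simps)
  have e: "gg N x - gg N y = (y-x)*(N^2-N+2 - x*y) / (2*x*y)"
    using x y by (simp add: gg_def field_simps power2_eq_square)
  have "0 \<le> (y-x)*(N^2-N+2 - x*y) / (2*x*y)" using h1 x y by simp
  then show ?thesis using e by linarith
qed

lemma lam_gg: "i \<le> 2^n \<Longrightarrow> lam n i = gg (2^n) (2^n - real i)"
proof -
  assume i: "i \<le> 2^n"
  have m: "real (2^n + 1 - i) = 2^n + 1 - real i" using i by (simp add: of_nat_diff)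
  have p1: "(2::real)^(n+1) = 2*2^n" by simp
  have p2: "(2::real)^(2*n) = 2^n*2^n" by (metis mult_2 power_add)
  show ?thesis unfolding lam_def Let_def m p1 p2 gg_def
    by (simp add: algebra_simps power2_eq_square)
qed

lemma pow32: "2 \<le> m \<Longrightarrow> 2*(2::int)^m \<le> 3^m"
proof (induction m rule: nat_induct_at_least)
  case base then show ?case by simp
next
  case (Suc m)
  have a1: "4*(2::int)^m \<le> 2*3^m" using Suc.IH by linarith
  have a2: "2*(3::int)^m \<le> 3*3^m" by simp
  show ?case using a1 a2 by (simp only: power_Suc)
qed

lemma greatest_le:
  fixes P :: "int \<Rightarrow> bool"
  assumes p0: "P 0" and ub: "\<And>d. P d \<Longrightarrow> d \<le> E"
  shows "(GREATEST d. P d) \<le> E"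
proof -
  define S where "S = {d. 0 \<le> d \<and> d \<le> E \<and> P d}"
  have fin: "finite S" unfolding S_def by (rule finite_subset[of _ "{0..E}"]) auto
  have ne: "0 \<in> S" using p0 ub[OF p0] S_def by auto
  define M where "M = Max S"
  have MS: "M \<in> S" using fin ne M_def by (metis Max_in empty_iff)
  have "(GREATEST d. P d) = M"
  proof (rule Greatest_equality)
    show "P M" using MS S_def by auto
    fix y assume "P y"
    show "y \<le> M"
    proof (cases "0 \<le> y")
      case True
      then have "y \<in> S" using \<open>P y\<close> ub S_def by auto
      then show ?thesis using fin M_def by simp
    next
      case False
      have "0 \<le> M" using MS S_def by auto
      then show ?thesis using False by simp
    qed
  qed
  then show ?thesis using MS S_def by auto
qed

lemma evprod: "even (m * (m - 1::nat))" by (cases "even m") auto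

locale hh =
  fixes n a b :: nat and h :: "int \<Rightarrow> int"
  assumes n2: "n \<ge> 2" and apos: "a > 0" and bpos: "b > 0"
    and hdef: "\<And>j. h j = (if j \<ge> 0 then int a * j ^ n + int b else 0)"
begin

lemma hnz: "h j \<noteq> 0 \<longleftrightarrow> j \<ge> 0"
proof -
  have "j \<ge> 0 \<Longrightarrow> int a * j ^ n + int b > 0" using bpos by (simp add: add_nonneg_pos)
  then show ?thesis unfolding hdef[of j] by (cases "j \<ge> 0") auto
qed

lemma npos: "n > 0" using n2 by simp

lemma beta_eq: "beta h d k = (\<Sum>j\<in>{0..k}. (-1) ^ nat (k - j) * int (nat (d - j) choose nat (k - j)) * h j)"
proof -
  have "{j. j \<le> k \<and> h j \<noteq> 0} = {0..k}" by (rule set_eqI) (auto simp add: hnz)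
  then show ?thesis by (simp add: beta_def)
qed

lemma beta_neg: "k < 0 \<Longrightarrow> beta h d k = 0"
  by (simp add: beta_eq)

lemma beta0: "beta h d 0 = int b"
  by (simp add: beta_eq hdef npos)

lemma beta1: "d \<ge> 1 \<Longrightarrow> beta h d 1 = int a + int b - d * int b"
proof -
  assume d: "d \<ge> 1"
  have s: "{0..1::int} = {0,1}" by auto
  show ?thesis using d by (simp add: beta_eq hdef s algebra_simps npos eval_nat_numeral)
qed

lemma beta2: "d \<ge> 2 \<Longrightarrow> 2 * beta h d 2 = 2*int a*2^n + 2*int b - 2*(d-1)*(int a+int b) + d*(d-1)*int b"
proof -
  assume d: "d \<ge> 2"
  have s: "{0..2::int} = {0,1,2}" by auto
  have c: "2 * int (nat d choose 2) = d * (d - 1)"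
  proof -
    have e: "even (nat d * (nat d - 1))" by (rule evprod)
    have "2 * (nat d choose 2) = nat d * (nat d - 1)" using e by (simp add: choose_two)
    then have "int (2 * (nat d choose 2)) = int (nat d) * (int (nat d) - 1)"
      using d by (simp add: of_nat_diff)
    then show ?thesis using d by simp
  qed
  have c1: "int b * (2 * int (nat d choose 2)) = int b * (d * (d - 1))" using c by simp
  have c2: "int b * (2 * int (nat d choose 2)) = d * (d * int b) - d * int b" unfolding c1 by (simp add: algebra_simps)
  show ?thesis using d c2 npos by (simp add: beta_eq hdef s algebra_simps power_0_left)
qed


definition good :: "int \<Rightarrow> bool" where "good d \<longleftrightarrow> (\<forall>k\<le>d. beta h d k \<ge> 0)"

lemma ub1: "good d \<Longrightarrow> 1 \<le> d \<Longrightarrow> (d-1) * int b \<le> int a"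
  using beta1[of d] unfolding good_def by (auto simp: algebra_simps)

lemma ub2: "good d \<Longrightarrow> 2 \<le> d \<Longrightarrow>
   2*int a*(d-1-2^n) \<le> int b*((d-1)*(d-2)+2)"
proof -
  assume g: "good d" and d: "2 \<le> d"
  have "0 \<le> beta h d 2" using g d unfolding good_def by auto
  then have "0 \<le> 2*int a*2^n + 2*int b - 2*(d-1)*(int a+int b) + d*(d-1)*int b"
    using beta2[OF d] by linarith
  moreover have "int b*((d-1)*(d-2)+2) - 2*int a*(d-1-2^n)
     = 2*int a*2^n + 2*int b - 2*(d-1)*(int a+int b) + d*(d-1)*int b"
    by (simp add: algebra_simps)
  ultimately show ?thesis by linarith
qed

lemma bigd: assumes g: "good d" shows "d \<le> 2^(n+1)"
proof (rule ccontr)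
  assume "\<not> d \<le> 2^(n+1)"
  then have d: "d \<ge> 2*2^n + 1" by simp
  have N: "(2::int)^n \<ge> 4"
  proof -
    have "(2::int)^2 \<le> 2^n" using n2 by (intro power_increasing) auto
    then show ?thesis by simp
  qed
  define y where "y = d - 1"
  have y: "y \<ge> 2*2^n" using d y_def by simp
  have d2: "2 \<le> d" using d N by simp
  have A: "y * int b \<le> int a" using ub1[OF g] d N y_def by simp
  have dy: "d = y + 1" using y_def by simp
  have B: "2*int a*(y-2^n) \<le> int b*(y*(y-1)+2)" using ub2[OF g d2] unfolding dy
    by (simp add: algebra_simps)
  have pos: "0 < y - 2^n" using y N by simp
  have "2*(y*int b)*(y-2^n) \<le> 2*int a*(y-2^n)"
    using A pos by (simp add: mult_right_mono)
  then have "int b * (2*y*(y-2^n)) \<le> int b*(y*(y-1)+2)" using B by (simp add: algebra_simps)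
  then have C: "2*y*(y-2^n) \<le> y*(y-1)+2" using bpos by simp
  have e: "2*y*(y-2^n) - (y*(y-1)+2) = y*(y-2*2^n+1) - 2" by (simp add: algebra_simps)
  have "y*1 \<le> y*(y-2*2^n+1)" using y N by (intro mult_left_mono) auto
  then show False using C e y N by linarith
qed

lemma key:
  assumes g: "good d" and d: "2^n + 2 \<le> d" and x1: "1 \<le> x0" and x2: "x0 \<le> real_of_int d - 1 - 2^n"
  shows "real a / real b \<le> gg (2^n) x0"
proof -
  have dd: "d \<le> 2*2^n" using bigd[OF g] by simp
  have d2: "2 \<le> d" using d by (smt (verit) zero_less_power)
  define x where "x = real_of_int d - 1 - 2^n"
  have "real_of_int (2^n+2) \<le> real_of_int d" using d by (simp only: of_int_le_iff)
  then have x1': "1 \<le> x" using x_def by simp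
  have "real_of_int d \<le> real_of_int (2*2^n)" using dd by (simp only: of_int_le_iff)
  then have xN: "x \<le> 2^n - 1" using x_def by simp
  have B: "2*int a*(d-1-2^n) \<le> int b*((d-1)*(d-2)+2)" using ub2[OF g d2] .
  then have "real_of_int (2*int a*(d-1-2^n)) \<le> real_of_int (int b*((d-1)*(d-2)+2))"
    by (simp only: of_int_le_iff)
  then have "2*real a*x \<le> real b*((x+2^n)*(x+2^n-1)+2)" unfolding x_def by (simp add: algebra_simps)
  then have "real a / real b \<le> ((x+2^n)*(x+2^n-1)+2)/(2*x)"
    using x1' bpos by (simp add: field_simps)
  then have "real a / real b \<le> gg (2^n) x" by (simp add: gg_def)
  also have "gg (2^n) x \<le> gg (2^n) x0"
  proof (rule gg_mono)
    show "0 < x0" using x1 by simp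
    show "x0 \<le> x" using x2 x_def by simp
    have "x0 * x \<le> (2^n-1)*(2^n-1)" using x1 x2 xN x_def
      by (intro mult_mono) auto
    then show "x0 * x \<le> (2^n - 1)^2" by (simp add: power2_eq_square)
  qed simp
  finally show ?thesis .
qed

lemma Ngt: "(2::nat)^n \<ge> 4"
proof -
  have "(2::nat)^2 \<le> 2^n" using n2 by (intro power_increasing) auto
  then show ?thesis by simp
qed

lemma lam_mono: assumes "1 \<le> i" "i \<le> j" "j \<le> 2^n - 1" shows "lam n i \<le> lam n j"
proof -
  have j1: "j + 1 \<le> 2^n" using assms(3) Ngt by linarith
  then have "real (j + 1) \<le> real (2^n)" by (simp only: of_nat_le_iff)
  then have j: "real j \<le> 2^n - 1" by simp
  have "gg (2^n) (2^n - real i) \<le> gg (2^n) (2^n - real j)"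
  proof (rule gg_mono)
    show "0 < 2^n - real j" using j by linarith
    show "2^n - real j \<le> 2^n - real i" using assms by simp
    have "(2^n - real j) * (2^n - real i) \<le> (2^n-1)*(2^n-1)" using assms j
      by (intro mult_mono) auto
    then show "(2^n - real j) * (2^n - real i) \<le> (2^n - 1)^2" by (simp add: power2_eq_square)
  qed simp
  moreover have "i \<le> 2^n" "j \<le> 2^n" using j1 assms by auto
  ultimately show ?thesis using lam_gg[of i] lam_gg[of j] by simp
qed

lemma floor_ub: "good d \<Longrightarrow> d \<le> \<lfloor>real a / real b\<rfloor> + 1"
proof (cases "d \<ge> 1")
  case True
  assume g: "good d"
  have "(d-1) * int b \<le> int a" using ub1[OF g True] .
  then have "real_of_int ((d-1) * int b) \<le> real_of_int (int a)" by (simp only: of_int_le_iff)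
  then have "real_of_int (d-1) \<le> real a / real b" using bpos by (simp add: field_simps)
  then have "d - 1 \<le> \<lfloor>real a / real b\<rfloor>" by (simp add: le_floor_iff)
  then show ?thesis by simp
next
  case False
  have "0 \<le> \<lfloor>real a / real b\<rfloor>" by simp
  then show ?thesis using False by linarith
qed

lemma main_ub: assumes g: "good d" shows "d \<le> eqh n (real a / real b)"
proof -
  define \<alpha> where "\<alpha> = real a / real b"
  have apos': "0 < \<alpha>" using apos bpos \<alpha>_def by simp
  have N4: "(4::real) \<le> 2^n" using Ngt by (metis numeral_le_iff of_nat_le_iff of_nat_numeral of_nat_power)
  have N1: "1 \<le> (2::nat)^n - 1" using Ngt by linarith
  have lamN: "lam n (2^n - 1) = gg (2^n) 1"
    using lam_gg[of "2^n - 1"] Ngt by (simp add: of_nat_diff)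
  show ?thesis
  proof (cases "0 < \<alpha> \<and> \<alpha> < 2^(n+1) - 1")
    case True
    then show ?thesis using floor_ub[OF g] unfolding eqh_def \<alpha>_def[symmetric] by simp
  next
    case c1: False
    show ?thesis
    proof (cases "2^(n+1) - 1 \<le> \<alpha> \<and> \<alpha> \<le> lam n 1")
      case True
      then show ?thesis using c1 bigd[OF g] unfolding eqh_def \<alpha>_def[symmetric] by simp
    next
      case c2: False
      show ?thesis
      proof (cases "lam n (2^n - 1) < \<alpha>")
        case True
        have "d \<le> 2^n + 1"
        proof (rule ccontr)
          assume "\<not> d \<le> 2^n + 1"
          then have d: "2^n + 2 \<le> d" by simp
          have "real_of_int (2^n+2) \<le> real_of_int d" using d by (simp only: of_int_le_iff)
          then have "\<alpha> \<le> gg (2^n) 1" using key[OF g d, of 1] \<alpha>_def by simp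
          then show False using True lamN by simp
        qed
        then show ?thesis using c1 c2 True unfolding eqh_def \<alpha>_def[symmetric] by auto
      next
        case c3: False
        have ge: "2^(n+1) - 1 \<le> \<alpha>" using c1 apos' by simp
        have l1: "lam n 1 < \<alpha>" using c2 ge by simp
        have lN: "\<alpha> \<le> lam n (2^n - 1)" using c3 by simp
        define Q where "Q i \<longleftrightarrow> 2 \<le> i \<and> i \<le> 2^n - 1 \<and> lam n (i - 1) < \<alpha> \<and> \<alpha> \<le> lam n i" for i
        define S where "S = {i. 2 \<le> i \<and> i \<le> 2^n - 1 \<and> \<alpha> \<le> lam n i}"
        have NS: "2^n - 1 \<in> S" using Ngt lN S_def by auto
        define i1 where "i1 = (LEAST i. i \<in> S)"
        have i1S: "i1 \<in> S" using NS i1_def by (metis LeastI)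
        have Qi1: "Q i1"
        proof -
          have "lam n (i1 - 1) < \<alpha>"
          proof (cases "i1 = 2")
            case True then show ?thesis using l1 by simp
          next
            case False
            have "i1 - 1 < i1" using i1S S_def by auto
            then have "i1 - 1 \<notin> S" using not_less_Least[of "i1 - 1" "\<lambda>i. i \<in> S"] i1_def by blast
            moreover have "2 \<le> i1 - 1" "i1 - 1 \<le> 2^n - 1" using i1S False S_def by auto
            ultimately show ?thesis using S_def by auto
          qed
          then show ?thesis using i1S S_def Q_def by auto
        qed
        have uq: "i = i1" if "Q i" for i
        proof (rule ccontr)
          assume ne: "i \<noteq> i1"
          have qi: "2 \<le> i" "i \<le> 2^n - 1" "lam n (i - 1) < \<alpha>" "\<alpha> \<le> lam n i"
            using that unfolding Q_def by blast+
          have qi1: "2 \<le> i1" "i1 \<le> 2^n - 1" "lam n (i1 - 1) < \<alpha>" "\<alpha> \<le> lam n i1"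
            using Qi1 unfolding Q_def by blast+
          show False
          proof (cases "i < i1")
            case True
            have "lam n i \<le> lam n (i1 - 1)" by (rule lam_mono) (use True qi qi1 in linarith)+
            then show False using qi qi1 by linarith
          next
            case False
            then have lt: "i1 < i" using ne by simp
            have "lam n i1 \<le> lam n (i - 1)" by (rule lam_mono) (use lt qi qi1 in linarith)+
            then show False using qi qi1 by linarith
          qed
        qed
        have the: "(THE i. Q i) = i1" using Qi1 uq by (rule the_equality)
        have e: "eqh n (real a / real b) = 2^(n+1) + 1 - int i1"
          using c1 c2 c3 the unfolding eqh_def \<alpha>_def[symmetric] Q_def by auto
        have i1b: "2 \<le> i1" "i1 \<le> 2^n - 1" "lam n (i1 - 1) < \<alpha>" using Qi1 Q_def by auto
        have "d \<le> 2^(n+1) + 1 - int i1"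
        proof (rule ccontr)
          assume "\<not> d \<le> 2^(n+1) + 1 - int i1"
          then have d0: "2*2^n + 2 - int i1 \<le> d" by simp
          have i1n: "i1 + 1 \<le> 2^n" using i1b Ngt by linarith
          then have "int (i1 + 1) \<le> int (2^n)" by (simp only: of_nat_le_iff)
          then have "int i1 + 1 \<le> 2^n" by simp
          then have d: "2^n + 2 \<le> d" using d0 by simp
          have "real_of_int (2*2^n + 2 - int i1) \<le> real_of_int d" using d0 by (simp only: of_int_le_iff)
          then have x2: "2^n + 1 - real i1 \<le> real_of_int d - 1 - 2^n" by simp
          have "real (i1 + 1) \<le> real (2^n)" using i1n by (simp only: of_nat_le_iff)
          then have "1 + real i1 \<le> 2^n" by simp
          then have x1: "1 \<le> 2^n + 1 - real i1" by linarith
          have "\<alpha> \<le> gg (2^n) (2^n + 1 - real i1)" using key[OF g d x1 x2] \<alpha>_def by simp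
          moreover have "lam n (i1 - 1) = gg (2^n) (2^n + 1 - real i1)"
          proof -
            have "i1 - 1 \<le> 2^n" using i1b by linarith
            then have "lam n (i1 - 1) = gg (2^n) (2^n - real (i1 - 1))" by (rule lam_gg)
            moreover have "(2::real)^n - real (i1 - 1) = 2^n + 1 - real i1" using i1b by (simp add: of_nat_diff)
            ultimately show ?thesis by metis
          qed
          ultimately show False using i1b by simp
        qed
        then show ?thesis using e by simp
      qed
    qed
  qed
qed

lemma good0: "good 0"
  unfolding good_def
proof (intro allI impI)
  fix k :: int assume "k \<le> 0"
  then show "0 \<le> beta h 0 k" by (cases "k = 0") (auto simp: beta0 beta_neg)
qed

lemma lower:
  assumes c1: "1 \<le> c" and c4: "c \<le> 4" and ab: "(c-1)*int b \<le> int a"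
  shows "good c"
  unfolding good_def
proof (intro allI impI)
  fix k assume kc: "k \<le> c"
  have s3: "{0..3::int} = {0,1,2,3}" and s4: "{0..4::int} = {0,1,2,3,4}" by auto
  have s2: "{0..2::int} = {0,1,2}" by auto
  have s1: "{0..1::int} = {0,1}" by auto
  have P1: "4 * int a \<le> int a * 2^n"
  proof -
    have "(4::int) \<le> 2^n" using Ngt by (metis of_nat_le_iff of_nat_numeral of_nat_power)
    then show ?thesis by (simp add: mult_left_mono mult.commute)
  qed
  have P2: "2 * (int a * 2^n) \<le> int a * 3^n"
    using pow32[OF n2] by (metis mult.left_commute mult_left_mono of_nat_0_le_iff)
  have P3: "int a * 3^n \<le> int a * 4^n"
    by (intro mult_left_mono power_mono) auto
  have bp: "0 < int b" using bpos by simp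
  consider "k < 0" | "k = 0" | "k = 1" | "k = 2" | "k = 3" | "k = 4" using kc c4 by linarith
  then show "0 \<le> beta h c k"
  proof cases
    case 1 then show ?thesis by (simp add: beta_neg)
  next
    case 2 then show ?thesis by (simp add: beta0)
  next
    case 3 then show ?thesis using beta1[OF c1] ab by (simp add: algebra_simps)
  next
    case 4
    then have c2: "2 \<le> c" using kc by simp
    consider "c = 2" | "c = 3" | "c = 4" using c2 c4 by linarith
    then show ?thesis
    proof cases
      case 1 then show ?thesis using 4 npos P1 bp by (simp add: beta_eq hdef s2 algebra_simps power_0_left eval_nat_numeral)
    next
      case 2 then show ?thesis using 4 npos P1 bp by (simp add: beta_eq hdef s2 algebra_simps power_0_left eval_nat_numeral)
    next
      case 3 then show ?thesis using 4 npos P1 bp by (simp add: beta_eq hdef s2 algebra_simps power_0_left eval_nat_numeral)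
    qed
  next
    case 5
    then have "3 \<le> c" using kc by simp
    then consider "c = 3" | "c = 4" using c4 by linarith
    then show ?thesis
    proof cases
      case 1 then show ?thesis using 5 npos P1 P2 bp by (simp add: beta_eq hdef s3 algebra_simps power_0_left eval_nat_numeral)
    next
      case 2
      have "beta h 4 3 = int a * 3^n - 2 * (int a * 2^n) + 3*int a - 2*int b"
        using npos by (simp add: beta_eq hdef s3 algebra_simps power_0_left eval_nat_numeral)
      then show ?thesis using 5 2 P2 ab by simp
    qed
  next
    case 6
    then have "c = 4" using kc c4 by simp
    then show ?thesis using 6 npos P1 P2 P3 bp by (simp add: beta_eq hdef s4 algebra_simps power_0_left eval_nat_numeral)
  qed
qed
end

theorem theorem3p9:
  fixes n a b :: nat and h :: "int \<Rightarrow> int"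
  assumes "n \<ge> 2" and "a > 0" and "b > 0"
    and "\<And>j. h j = (if j \<ge> 0 then int a * j ^ n + int b else 0)"
  shows "hdepth h \<le> eqh n (real a / real b)
     \<and> (\<lfloor>real a / real b\<rfloor> + 1 \<le> 4 \<longrightarrow> hdepth h = eqh n (real a / real b))"
proof -
  interpret hh n a b h using assms by unfold_locales
  have hd: "hdepth h = (GREATEST d. good d)" unfolding hdepth_def good_def by simp
  have ub: "hdepth h \<le> eqh n (real a / real b)"
    unfolding hd by (rule greatest_le[where P=good, OF good0 main_ub])
  moreover have "\<lfloor>real a / real b\<rfloor> + 1 \<le> 4 \<longrightarrow> hdepth h = eqh n (real a / real b)"
  proof
    assume f4: "\<lfloor>real a / real b\<rfloor> + 1 \<le> 4"
    define c where "c = \<lfloor>real a / real b\<rfloor> + 1"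
    have f0: "0 \<le> \<lfloor>real a / real b\<rfloor>" by simp
    have c1: "1 \<le> c" using f0 c_def by simp
    have c4: "c \<le> 4" using f4 c_def by simp
    have "real_of_int \<lfloor>real a / real b\<rfloor> \<le> real a / real b" by (rule of_int_floor_le)
    then have "real_of_int \<lfloor>real a / real b\<rfloor> * real b \<le> (real a / real b) * real b"
      by (rule mult_right_mono) simp
    also have "\<dots> = real a" using assms(3) by simp
    finally have "real_of_int \<lfloor>real a / real b\<rfloor> * real b \<le> real a" .
    then have "real_of_int (\<lfloor>real a / real b\<rfloor> * int b) \<le> real_of_int (int a)" by simp
    then have "\<lfloor>real a / real b\<rfloor> * int b \<le> int a" by (simp only: of_int_le_iff)
    then have ab: "(c-1)*int b \<le> int a" using c_def by simp
    have gc: "good c" by (rule lower[OF c1 c4 ab])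
    have "(GREATEST d. good d) = c"
    proof (rule Greatest_equality)
      show "good c" by (rule gc)
      fix y assume "good y" then show "y \<le> c" using floor_ub c_def by simp
    qed
    moreover have "eqh n (real a / real b) = c"
    proof -
      have lt: "real a / real b < 4"
      proof -
        have "real a / real b < real_of_int (\<lfloor>real a / real b\<rfloor> + 1)" using floor_correct[of "real a / real b"] by simp
        also have "\<dots> \<le> 4" using f4 by (simp only: of_int_le_iff[symmetric])
        finally show ?thesis .
      qed
      have "(8::real) \<le> 2^(n+1)"
      proof -
        have "(2::real)^3 \<le> 2^(n+1)" using assms(1) by (intro power_increasing) auto
        then show ?thesis by simp
      qed
      moreover have "0 < real a / real b" using assms by simp
      ultimately show ?thesis using lt unfolding eqh_def c_def by simp
    qed
    ultimately show "hdepth h = eqh n (real a / real b)" using hd by simp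
  qed
  ultimately show ?thesis by blast
qed

end
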